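(* For each $n$, let $A^{(n)}$ be a clustering of $\{1,\dots,n\}$, let $s^{(n)}$ be a cluster-size specification of $n$ elements, let $B^{(n)}\sim\mathcal C(s^{(n)})$, and let $N_{11}^{(n)}$ be the number of unordered pairs of distinct elements lying in a common cluster of both $A^{(n)}$ and $B^{(n)}$. Then $\operatorname{Var}(N_{11}^{(n)})=o(n^4)$ as $n\to\infty$; consequently $N_{11}^{(n)}/N-m_Am_B/N^2\to0$ in probability, where $N=\binom n2$ and $m_A,m_B$ are the numbers of intra-cluster pairs of $A^{(n)}$ and $B^{(n)}$.
   Context: A clustering is a partition into nonempty clusters; an intra-cluster pair is a pair of distinct elements in the same cluster. For a multiset $s$ of positive integers summing to $n$, $\mathcal C(s)$ is the uniform distribution over clusterings of $\{1,\dots,n\}$ whose multiset of cluster sizes is $s$. *)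

theory Defs
  imports "HOL-Probability.Probability" "HOL-Library.Disjoint_Sets"
    "HOL-Library.Multiset" "HOL-Library.Landau_Symbols"
begin

definition clusterings :: "nat \<Rightarrow> nat set set set" where
  "clusterings n = {P. partition_on {1..n} P}"

definition cluster_sizes :: "nat set set \<Rightarrow> nat multiset" where
  "cluster_sizes P = image_mset card (mset_set P)"

definition size_spec :: "nat \<Rightarrow> nat multiset \<Rightarrow> bool" where
  "size_spec n s \<longleftrightarrow> (\<forall>k\<in>#s. 0 < k) \<and> sum_mset s = n"

definition unif_clustering :: "nat \<Rightarrow> nat multiset \<Rightarrow> nat set set pmf" where
  "unif_clustering n s = pmf_of_set {P \<in> clusterings n. cluster_sizes P = s}"

definition intra_pairs :: "nat set set \<Rightarrow> nat set set" where
  "intra_pairs P = {{i, j} | i j. i \<noteq> j \<and> (\<exists>C\<in>P. i \<in> C \<and> j \<in> C)}"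

definition N11 :: "nat set set \<Rightarrow> nat set set \<Rightarrow> nat" where
  "N11 A B = card (intra_pairs A \<inter> intra_pairs B)"

definition num_intra :: "nat set set \<Rightarrow> nat" where
  "num_intra P = card (intra_pairs P)"

end

theory Submission
  imports Defs
begin


definition Sset :: "nat \<Rightarrow> nat multiset \<Rightarrow> nat set set set" where
  "Sset n s = {P \<in> clusterings n. cluster_sizes P = s}"

definition Pr :: "nat \<Rightarrow> nat set set" where
  "Pr n = {X. X \<subseteq> {1..n} \<and> card X = 2}"

lemma finite_Sset: "finite (Sset n s)"
proof (rule finite_subset)
  show "Sset n s \<subseteq> Pow (Pow {1..n})"
    unfolding Sset_def clusterings_def partition_on_def by auto
qed simp

lemma exists_part: "size_spec n s \<Longrightarrow> \<exists>P. partition_on {1..n} P \<and> cluster_sizes P = s"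
proof (induction s arbitrary: n)
  case empty
  then show ?case by (auto simp: size_spec_def cluster_sizes_def partition_on_empty intro!: exI[of _ "{}"])
next
  case (add k s)
  have k: "k > 0" and n: "n = k + sum_mset s" using add.prems by (auto simp: size_spec_def)
  have "size_spec (n - k) s" using add.prems by (auto simp: size_spec_def)
  then obtain P where P: "partition_on {1..n-k} P" "cluster_sizes P = s" using add.IH by blast
  define C where "C = {n-k+1..n}"
  have UP: "\<Union>P = {1..n-k}" using partition_onD1[OF P(1)] by simp
  have dj: "disjnt C (\<Union>P)" unfolding UP by (auto simp: C_def disjnt_def)
  have "{1..n} - C = {1..n-k}" using k n by (auto simp: C_def)
  then have "partition_on {1..n} (insert C P)"
    using P(1) k n by (subst partition_on_insert[OF dj]) (auto simp: C_def)
  moreover have "C \<notin> P"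
  proof
    assume "C \<in> P"
    then have "C \<subseteq> {1..n-k}" using partition_onD1[OF P(1)] by auto
    moreover have "n \<in> C" using k n by (auto simp: C_def)
    ultimately have "1 \<le> n \<and> n \<le> n-k" by auto
    then show False using k by arith
  qed
  moreover have "finite P" using P(1) finitely_many_partition_on
    by (metis finite_UnionD finite_atLeastAtMost partition_onD1)
  moreover have "card C = k" using k n by (simp add: C_def)
  ultimately show ?case using P(2) by (auto simp: cluster_sizes_def intro!: exI[of _ "insert C P"])
qed

lemma Sset_ne: "size_spec n s \<Longrightarrow> Sset n s \<noteq> {}"
  using exists_part by (auto simp: Sset_def clusterings_def)

lemma intra_pairs_Pr: "partition_on {1..n} P \<Longrightarrow> intra_pairs P \<subseteq> Pr n"
  unfolding intra_pairs_def Pr_def using partition_onD1 by fastforce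

lemma intra_pairs_UN: "partition_on A P \<Longrightarrow> intra_pairs P = (\<Union>C\<in>P. {X. X \<subseteq> C \<and> card X = 2})"
  unfolding intra_pairs_def by (auto simp: card_2_iff)

lemma card_intra: assumes "partition_on A P" "finite A"
  shows "card (intra_pairs P) = (\<Sum>C\<in>P. card C choose 2)"
proof -
  have fP: "finite P" using assms by (metis finite_UnionD partition_onD1)
  have fC: "\<And>C. C \<in> P \<Longrightarrow> finite C" using assms partition_onD1 by (metis Union_upper finite_subset)
  have "card (intra_pairs P) = (\<Sum>C\<in>P. card {X. X \<subseteq> C \<and> card X = 2})"
    unfolding intra_pairs_UN[OF assms(1)]
  proof (rule card_UN_disjoint[OF fP])
    show "\<forall>i\<in>P. finite {X. X \<subseteq> i \<and> card X = 2}" using fC by auto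
    show "\<forall>i\<in>P. \<forall>j\<in>P. i \<noteq> j \<longrightarrow> {X. X \<subseteq> i \<and> card X = 2} \<inter> {X. X \<subseteq> j \<and> card X = 2} = {}"
    proof (intro ballI impI)
      fix i j assume ij: "i \<in> P" "j \<in> P" "i \<noteq> j"
      have "disjnt i j" using partition_onD2[OF assms(1)] ij by (auto simp: pairwise_def)
      then show "{X. X \<subseteq> i \<and> card X = 2} \<inter> {X. X \<subseteq> j \<and> card X = 2} = {}"
        by (auto simp: disjnt_def card_2_iff)
    qed
  qed
  also have "\<dots> = (\<Sum>C\<in>P. card C choose 2)" using fC n_subsets by (intro sum.cong) auto
  finally show ?thesis .
qed

lemma num_intra_Sset: "B \<in> Sset n s \<Longrightarrow> num_intra B = sum_mset (image_mset (\<lambda>k. k choose 2) s)"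
proof -
  assume B: "B \<in> Sset n s"
  then have p: "partition_on {1..n} B" and cs: "cluster_sizes B = s" by (auto simp: Sset_def clusterings_def)
  show ?thesis unfolding num_intra_def card_intra[OF p finite_atLeastAtMost] sum_unfold_sum_mset
    cs[symmetric] cluster_sizes_def by (simp add: multiset.map_comp comp_def)
qed



definition cnt :: "nat \<Rightarrow> nat multiset \<Rightarrow> nat set \<Rightarrow> nat set \<Rightarrow> nat" where
  "cnt n s p q = card {B \<in> Sset n s. p \<in> intra_pairs B \<and> q \<in> intra_pairs B}"

lemma Phi_in:
  assumes \<sigma>: "bij_betw \<sigma> {1..n} {1..n}" and B: "B \<in> Sset n s"
  shows "(`) \<sigma> ` B \<in> Sset n s"
proof -
  have p: "partition_on {1..n} B" and cs: "cluster_sizes B = s" using B by (auto simp: Sset_def clusterings_def)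
  have inj: "inj_on \<sigma> {1..n}" using bij_betw_imp_inj_on[OF \<sigma>] .
  have im: "\<sigma> ` {1..n} = {1..n}" using bij_betw_imp_surj_on[OF \<sigma>] .
  have "partition_on (\<sigma> ` {1..n}) ((`) \<sigma> ` B - {{}})" by (rule partition_on_inj_image[OF p inj])
  moreover have "(`) \<sigma> ` B - {{}} = (`) \<sigma> ` B" using partition_onD3[OF p] by auto
  ultimately have p2: "partition_on {1..n} ((`) \<sigma> ` B)" using im by simp
  have sub: "B \<subseteq> Pow {1..n}" using partition_onD1[OF p] by auto
  have injB: "inj_on ((`) \<sigma>) B" using inj_on_image_Pow[OF inj] sub inj_on_subset by blast
  have "cluster_sizes ((`) \<sigma> ` B) = image_mset card (image_mset ((`) \<sigma>) (mset_set B))"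
    unfolding cluster_sizes_def image_mset_mset_set[OF injB] ..
  also have "\<dots> = image_mset (\<lambda>C. card (\<sigma> ` C)) (mset_set B)" by (simp add: multiset.map_comp comp_def)
  also have "\<dots> = image_mset card (mset_set B)"
  proof (rule image_mset_cong)
    fix C assume "C \<in># mset_set B"
    then have "C \<in> B" by (metis elem_mset_set empty_iff mset_set.infinite set_mset_empty)
    then have "C \<subseteq> {1..n}" using sub by auto
    then show "card (\<sigma> ` C) = card C" using inj by (meson card_image inj_on_subset)
  qed
  finally show ?thesis using p2 cs by (simp add: Sset_def clusterings_def cluster_sizes_def)
qed

lemma intra_sup:
  assumes inj: "inj_on \<sigma> {1..n}" and p: "partition_on {1..n} B" and x: "x \<in> intra_pairs B"
  shows "\<sigma> ` x \<in> intra_pairs ((`) \<sigma> ` B)"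
proof -
  obtain i j C where ij: "x = {i, j}" "i \<noteq> j" "C \<in> B" "i \<in> C" "j \<in> C" using x by (auto simp: intra_pairs_def)
  have "C \<subseteq> {1..n}" using partition_onD1[OF p] ij by auto
  then have "\<sigma> i \<noteq> \<sigma> j" using inj ij by (meson inj_onD subsetD)
  then show ?thesis unfolding intra_pairs_def using ij by blast
qed

lemma cnt_le:
  assumes \<sigma>: "bij_betw \<sigma> {1..n} {1..n}"
  shows "cnt n s p q \<le> cnt n s (\<sigma> ` p) (\<sigma> ` q)"
proof -
  have inj: "inj_on \<sigma> {1..n}" using bij_betw_imp_inj_on[OF \<sigma>] .
  let ?A = "{B \<in> Sset n s. p \<in> intra_pairs B \<and> q \<in> intra_pairs B}"
  let ?B = "{B \<in> Sset n s. \<sigma> ` p \<in> intra_pairs B \<and> \<sigma> ` q \<in> intra_pairs B}"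
  have "(`) ((`) \<sigma>) ` ?A \<subseteq> ?B"
  proof
    fix y assume "y \<in> (`) ((`) \<sigma>) ` ?A"
    then obtain B where B: "B \<in> ?A" "y = (`) \<sigma> ` B" by blast
    have p: "partition_on {1..n} B" using B by (auto simp: Sset_def clusterings_def)
    have "y \<in> Sset n s" using B(2) Phi_in[OF \<sigma>] B(1) by simp
    moreover have "\<sigma> ` p \<in> intra_pairs y" "\<sigma> ` q \<in> intra_pairs y"
      using B(1) unfolding B(2) by (simp_all add: intra_sup[OF inj p])
    ultimately show "y \<in> ?B" by simp
  qed
  moreover have "inj_on ((`) ((`) \<sigma>)) ?A"
  proof -
    have "?A \<subseteq> Pow (Pow {1..n})" by (auto simp: Sset_def clusterings_def partition_on_def)
    moreover have "inj_on ((`) ((`) \<sigma>)) (Pow (Pow {1..n}))"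
      by (intro inj_on_image_Pow inj_on_image_Pow inj)
    ultimately show ?thesis using inj_on_subset by blast
  qed
  moreover have "finite ?B" using finite_Sset by simp
  ultimately show ?thesis unfolding cnt_def by (intro card_inj_on_le)
qed

lemma cnt_eq:
  assumes \<sigma>: "bij_betw \<sigma> {1..n} {1..n}" and "p \<subseteq> {1..n}" "q \<subseteq> {1..n}"
  shows "cnt n s (\<sigma> ` p) (\<sigma> ` q) = cnt n s p q"
proof -
  have inj: "inj_on \<sigma> {1..n}" using bij_betw_imp_inj_on[OF \<sigma>] .
  have \<tau>: "bij_betw (inv_into {1..n} \<sigma>) {1..n} {1..n}" using bij_betw_inv_into[OF \<sigma>] .
  have "cnt n s (\<sigma> ` p) (\<sigma> ` q) \<le> cnt n s (inv_into {1..n} \<sigma> ` \<sigma> ` p) (inv_into {1..n} \<sigma> ` \<sigma> ` q)"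
    by (rule cnt_le[OF \<tau>])
  also have "\<dots> = cnt n s p q" using inj assms by simp
  finally show ?thesis using cnt_le[OF \<sigma>, of s p q] by simp
qed

lemma exists_sigma:
  fixes n :: nat
  assumes "p \<subseteq> {1..n}" "q \<subseteq> {1..n}" "p' \<subseteq> {1..n}" "q' \<subseteq> {1..n}"
    "card p = card p'" "card q = card q'" "p \<inter> q = {}" "p' \<inter> q' = {}"
  shows "\<exists>\<sigma>. bij_betw \<sigma> {1..n} {1..n} \<and> \<sigma> ` p = p' \<and> \<sigma> ` q = q'"
proof -
  have fin: "finite p" "finite q" "finite p'" "finite q'" using assms(1-4) finite_subset by blast+
  obtain f1 where f1: "bij_betw f1 p p'" using finite_same_card_bij[OF fin(1) fin(3) assms(5)] by blast
  obtain f2 where f2: "bij_betw f2 q q'" using finite_same_card_bij[OF fin(2) fin(4) assms(6)] by blast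
  define R where "R = {1..n} - (p \<union> q)"
  define R' where "R' = {1..n} - (p' \<union> q')"
  have "card R = n - (card p + card q)" unfolding R_def using assms fin
    by (simp add: card_Diff_subset card_Un_disjoint)
  moreover have "card R' = n - (card p' + card q')" unfolding R'_def using assms fin
    by (simp add: card_Diff_subset card_Un_disjoint)
  ultimately have "card R = card R'" using assms by simp
  moreover have "finite R" "finite R'" unfolding R_def R'_def by auto
  ultimately obtain f3 where f3: "bij_betw f3 R R'" using finite_same_card_bij by blast
  define \<sigma> where "\<sigma> x = (if x \<in> p then f1 x else if x \<in> q then f2 x else f3 x)" for x
  have b1: "bij_betw \<sigma> p p'" by (intro bij_betw_cong[THEN iffD1, OF _ f1]) (auto simp: \<sigma>_def)
  have b2: "bij_betw \<sigma> q q'" using assms(7) by (intro bij_betw_cong[THEN iffD1, OF _ f2]) (auto simp: \<sigma>_def)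
  have b3: "bij_betw \<sigma> R R'" by (intro bij_betw_cong[THEN iffD1, OF _ f3]) (auto simp: \<sigma>_def R_def)
  have b23: "bij_betw \<sigma> (q \<union> R) (q' \<union> R')" by (rule bij_betw_combine[OF b2 b3]) (auto simp: R'_def)
  have b: "bij_betw \<sigma> (p \<union> (q \<union> R)) (p' \<union> (q' \<union> R'))"
    by (rule bij_betw_combine[OF b1 b23]) (use assms(8) in \<open>auto simp: R'_def\<close>)
  have "p \<union> (q \<union> R) = {1..n}" "p' \<union> (q' \<union> R') = {1..n}" using assms(1-4) by (auto simp: R_def R'_def)
  then show ?thesis using b b1 b2 by (metis bij_betw_imp_surj_on)
qed



lemma var_pmf_of_set:
  assumes "finite S" "S \<noteq> {}"
  shows "measure_pmf.variance (pmf_of_set S) f = (\<Sum>B\<in>S. (f B - (\<Sum>B\<in>S. f B) / card S)^2) / card S"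
  using assms by (simp add: integral_pmf_of_set)

lemma var_algebra:
  fixes X :: "'p \<Rightarrow> 'b \<Rightarrow> real"
  assumes S: "finite S" "S \<noteq> {}" and I: "finite I"
  shows "(\<Sum>B\<in>S. ((\<Sum>p\<in>I. X p B) - (\<Sum>B\<in>S. \<Sum>p\<in>I. X p B) / card S)^2) / card S
       = (\<Sum>p\<in>I. \<Sum>q\<in>I. (\<Sum>B\<in>S. X p B * X q B) / card S
            - (\<Sum>B\<in>S. X p B) / card S * ((\<Sum>B\<in>S. X q B) / card S))"
proof -
  define K where "K = real (card S)"
  have K: "K > 0" using S by (simp add: K_def card_gt_0_iff)
  define m where "m p = (\<Sum>B\<in>S. X p B) / K" for p
  have sm: "(\<Sum>B\<in>S. X p B) = K * m p" for p using K by (simp add: m_def)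
  have mean: "(\<Sum>B\<in>S. \<Sum>p\<in>I. X p B) / K = (\<Sum>p\<in>I. m p)"
    by (simp add: sum.swap[of _ S] m_def sum_divide_distrib)
  have sq: "((\<Sum>p\<in>I. X p B) - (\<Sum>p\<in>I. m p))^2 = (\<Sum>p\<in>I. \<Sum>q\<in>I. (X p B - m p) * (X q B - m q))" for B
    by (simp add: power2_eq_square sum_subtractf[symmetric] sum_product)
  have inner: "(\<Sum>B\<in>S. (X p B - m p) * (X q B - m q)) = (\<Sum>B\<in>S. X p B * X q B) - K * m p * m q" for p q
  proof -
    have "(\<Sum>B\<in>S. (X p B - m p) * (X q B - m q)) =
       (\<Sum>B\<in>S. X p B * X q B) - m p * (\<Sum>B\<in>S. X q B) - m q * (\<Sum>B\<in>S. X p B) + (\<Sum>B\<in>S. m p * m q)"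
    proof -
      have "(\<Sum>B\<in>S. (X p B - m p) * (X q B - m q)) =
         (\<Sum>B\<in>S. X p B * X q B - m p * X q B - m q * X p B + m p * m q)"
        by (rule sum.cong) (simp_all add: algebra_simps)
      also have "\<dots> = (\<Sum>B\<in>S. X p B * X q B) - (\<Sum>B\<in>S. m p * X q B) - (\<Sum>B\<in>S. m q * X p B) + (\<Sum>B\<in>S. m p * m q)"
        by (simp only: sum.distrib sum_subtractf)
      finally show ?thesis by (simp only: sum_distrib_left[symmetric])
    qed
    also have "\<dots> = (\<Sum>B\<in>S. X p B * X q B) - K * m p * m q"
      by (simp add: sm K_def)
    finally show ?thesis .
  qed
  have "(\<Sum>B\<in>S. ((\<Sum>p\<in>I. X p B) - (\<Sum>B\<in>S. \<Sum>p\<in>I. X p B) / K)^2) / K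
      = (\<Sum>B\<in>S. \<Sum>p\<in>I. \<Sum>q\<in>I. (X p B - m p) * (X q B - m q)) / K"
    unfolding mean sq ..
  also have "\<dots> = (\<Sum>p\<in>I. \<Sum>q\<in>I. (\<Sum>B\<in>S. (X p B - m p) * (X q B - m q)) / K)"
    by (simp add: sum.swap[of _ S] sum_divide_distrib)
  also have "\<dots> = (\<Sum>p\<in>I. \<Sum>q\<in>I. (\<Sum>B\<in>S. X p B * X q B) / K - m p * m q)"
    unfolding inner using K by (simp add: diff_divide_distrib)
  finally show ?thesis unfolding K_def m_def .
qed

definition hh :: "nat \<Rightarrow> nat multiset \<Rightarrow> nat set \<Rightarrow> nat set \<Rightarrow> real" where
  "hh n s p q = real (cnt n s p q) / card (Sset n s)
     - real (cnt n s p p) / card (Sset n s) * (real (cnt n s q q) / card (Sset n s))"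

lemma card_inter_sum: "finite I \<Longrightarrow> real (card (I \<inter> J)) = (\<Sum>p\<in>I. if p \<in> J then 1 else 0)"
  by (simp add: sum.inter_restrict[symmetric])

lemma cnt_sum: "real (cnt n s p q) = (\<Sum>B\<in>Sset n s. (if p \<in> intra_pairs B then 1 else 0) * (if q \<in> intra_pairs B then 1 else 0))"
proof -
  have "real (cnt n s p q) = (\<Sum>B\<in>{B \<in> Sset n s. p \<in> intra_pairs B \<and> q \<in> intra_pairs B}. 1)"
    by (simp add: cnt_def)
  also have "\<dots> = (\<Sum>B\<in>Sset n s. if p \<in> intra_pairs B \<and> q \<in> intra_pairs B then 1 else 0)"
    using finite_Sset by (rule sum.inter_filter)
  also have "\<dots> = (\<Sum>B\<in>Sset n s. (if p \<in> intra_pairs B then 1 else 0) * (if q \<in> intra_pairs B then 1 else 0))"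
    by (rule sum.cong) auto
  finally show ?thesis .
qed

lemma if_sq: "(if P then 1 else 0) * (if P then 1 else 0) = (if P then 1 else (0::real))"
  by simp

lemma var_hh:
  assumes ss: "size_spec n s" and I: "finite I"
  shows "measure_pmf.variance (pmf_of_set (Sset n s)) (\<lambda>B. real (card (I \<inter> intra_pairs B)))
       = (\<Sum>p\<in>I. \<Sum>q\<in>I. hh n s p q)"
proof -
  let ?X = "\<lambda>p B. (if p \<in> intra_pairs B then 1 else 0::real)"
  have "measure_pmf.variance (pmf_of_set (Sset n s)) (\<lambda>B. real (card (I \<inter> intra_pairs B)))
      = measure_pmf.variance (pmf_of_set (Sset n s)) (\<lambda>B. \<Sum>p\<in>I. ?X p B)"
    using card_inter_sum[OF I] by simp
  also have "\<dots> = (\<Sum>p\<in>I. \<Sum>q\<in>I. hh n s p q)"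
    unfolding var_pmf_of_set[OF finite_Sset Sset_ne[OF ss]] var_algebra[OF finite_Sset Sset_ne[OF ss] I]
    unfolding hh_def cnt_sum by (simp add: if_sq)
  finally show ?thesis .
qed



lemma finite_Pr: "finite (Pr n)"
  by (rule finite_subset[of _ "Pow {1..n}"]) (auto simp: Pr_def)

lemma card_Pr: "card (Pr n) = n choose 2"
  unfolding Pr_def using n_subsets[of "{1..n}" 2] by simp

lemma cnt_le_card: "cnt n s p q \<le> card (Sset n s)"
  unfolding cnt_def by (rule card_mono[OF finite_Sset]) auto

lemma hh_bound:
  assumes ss: "size_spec n s" shows "\<bar>hh n s p q\<bar> \<le> 1"
proof -
  define K where "K = real (card (Sset n s))"
  have K: "K > 0" using Sset_ne[OF ss] finite_Sset by (simp add: K_def card_gt_0_iff)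
  have r: "0 \<le> real (cnt n s a b) / K \<and> real (cnt n s a b) / K \<le> 1" for a b
    using cnt_le_card[of n s a b] K by (simp add: K_def divide_le_eq_1)
  have "0 \<le> real (cnt n s p p) / K * (real (cnt n s q q) / K)"
    using r by simp
  moreover have "real (cnt n s p p) / K * (real (cnt n s q q) / K) \<le> 1"
    using r[of p p] r[of q q] by (metis mult_le_one)
  ultimately show ?thesis using r[of p q] unfolding hh_def K_def[symmetric] by linarith
qed

lemma hh_const:
  assumes "p \<in> Pr n" "q \<in> Pr n" "p' \<in> Pr n" "q' \<in> Pr n" "p \<inter> q = {}" "p' \<inter> q' = {}"
  shows "hh n s p q = hh n s p' q'"
proof -
  obtain \<sigma> where \<sigma>: "bij_betw \<sigma> {1..n} {1..n}" "\<sigma> ` p = p'" "\<sigma> ` q = q'"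
    using exists_sigma[of p n q p' q'] assms by (auto simp: Pr_def)
  have sub: "p \<subseteq> {1..n}" "q \<subseteq> {1..n}" using assms by (auto simp: Pr_def)
  have "cnt n s p' q' = cnt n s p q" "cnt n s p' p' = cnt n s p p" "cnt n s q' q' = cnt n s q q"
    using cnt_eq[OF \<sigma>(1) sub(1) sub(2)] cnt_eq[OF \<sigma>(1) sub(1) sub(1)] cnt_eq[OF \<sigma>(1) sub(2) sub(2)] \<sigma>
    by simp_all
  then show ?thesis by (simp add: hh_def)
qed

lemma cnt_pp_const:
  assumes "p \<in> Pr n" "p' \<in> Pr n"
  shows "cnt n s p p = cnt n s p' p'"
proof -
  obtain \<sigma> where \<sigma>: "bij_betw \<sigma> {1..n} {1..n}" "\<sigma> ` p = p'"
    using exists_sigma[of p n "{}" p' "{}"] assms by (auto simp: Pr_def)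
  have sub: "p \<subseteq> {1..n}" using assms by (auto simp: Pr_def)
  show ?thesis using cnt_eq[OF \<sigma>(1) sub sub] \<sigma> by simp
qed

lemma card_meet:
  assumes p: "p \<in> Pr n"
  shows "card {q \<in> Pr n. p \<inter> q \<noteq> {}} \<le> 2 * n"
proof -
  have "{q \<in> Pr n. p \<inter> q \<noteq> {}} \<subseteq> (\<Union>x\<in>p. (\<lambda>y. {x, y}) ` {1..n})"
  proof
    fix q assume q: "q \<in> {q \<in> Pr n. p \<inter> q \<noteq> {}}"
    then obtain x where x: "x \<in> p" "x \<in> q" by blast
    from q have "card q = 2" "q \<subseteq> {1..n}" by (auto simp: Pr_def)
    then obtain a b where ab: "q = {a, b}" "a \<noteq> b" by (auto simp: card_2_iff)
    have "a \<in> {1..n}" "b \<in> {1..n}" using ab \<open>q \<subseteq> {1..n}\<close> by auto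
    from x ab have "x = a \<or> x = b" by auto
    then have "q \<in> (\<lambda>y. {x, y}) ` {1..n}"
    proof
      assume "x = a" then have "q = (\<lambda>y. {x, y}) b" using ab by simp
      then show ?thesis using \<open>b \<in> {1..n}\<close> by blast
    next
      assume "x = b" then have "q = (\<lambda>y. {x, y}) a" using ab by auto
      then show ?thesis using \<open>a \<in> {1..n}\<close> by blast
    qed
    then show "q \<in> (\<Union>x\<in>p. (\<lambda>y. {x, y}) ` {1..n})" using x(1) by blast
  qed
  moreover have "card p = 2" using p by (auto simp: Pr_def)
  moreover then have "finite p" by (metis card.infinite zero_neq_numeral)
  ultimately have "card {q \<in> Pr n. p \<inter> q \<noteq> {}} \<le> card (\<Union>x\<in>p. (\<lambda>y. {x, y}) ` {1..n})"
    by (intro card_mono) auto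
  also have "\<dots> \<le> (\<Sum>x\<in>p. card ((\<lambda>y. {x, y}) ` {1..n}))"
    using \<open>finite p\<close> by (rule card_UN_le)
  also have "\<dots> \<le> (\<Sum>x\<in>p. n)"
  proof (intro sum_mono)
    fix x show "card ((\<lambda>y. {x, y}) ` {1..n}) \<le> n"
      using card_image_le[of "{1..n}" "\<lambda>y. {x, y}"] by simp
  qed
  also have "\<dots> = 2 * n" using \<open>card p = 2\<close> by simp
  finally show ?thesis .
qed

lemma card_ND: "card (Pr n \<times> Pr n - {x. fst x \<inter> snd x = {}}) \<le> 2 * n ^ 3"
proof -
  have eq: "Pr n \<times> Pr n - {x. fst x \<inter> snd x = {}} = Sigma (Pr n) (\<lambda>p. {q \<in> Pr n. p \<inter> q \<noteq> {}})"
    by auto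
  have "card (Pr n \<times> Pr n - {x. fst x \<inter> snd x = {}}) = (\<Sum>p\<in>Pr n. card {q \<in> Pr n. p \<inter> q \<noteq> {}})"
    unfolding eq using finite_Pr by (subst card_SigmaI) (simp_all add: finite_Pr)
  also have "\<dots> \<le> (\<Sum>p\<in>Pr n. 2 * n)" by (intro sum_mono card_meet)
  also have "\<dots> = card (Pr n) * (2 * n)" by simp
  also have "\<dots> \<le> n ^ 2 * (2 * n)" unfolding card_Pr
  proof (intro mult_right_mono)
    show "n choose 2 \<le> n ^ 2"
    proof (cases "2 \<le> n")
      case True then show ?thesis by (rule binomial_le_pow)
    next
      case False then have h0: "n choose 2 = 0" using binomial_eq_0[of n 2] by simp
      show ?thesis unfolding h0 by (rule le0)
    qed
  qed simp
  also have "\<dots> = 2 * n ^ 3" by (simp add: power2_eq_square power3_eq_cube)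
  finally show ?thesis .
qed



lemma var_nonneg:
  fixes f :: "nat set set \<Rightarrow> real"
  assumes ss: "size_spec n s"
  shows "0 \<le> measure_pmf.variance (pmf_of_set (Sset n s)) f"
  by (subst var_pmf_of_set[OF finite_Sset Sset_ne[OF ss]]) (intro divide_nonneg_nonneg sum_nonneg; simp)

lemma var_zero:
  assumes ss: "size_spec n s"
  shows "measure_pmf.variance (pmf_of_set (Sset n s)) (\<lambda>B. real (card (Pr n \<inter> intra_pairs B))) = 0"
proof -
  define m where "m = sum_mset (image_mset (\<lambda>k. k choose 2) s)"
  have c: "real (card (Pr n \<inter> intra_pairs B)) = real m" if "B \<in> Sset n s" for B
  proof -
    have "partition_on {1..n} B" using that by (auto simp: Sset_def clusterings_def)
    then have "Pr n \<inter> intra_pairs B = intra_pairs B" using intra_pairs_Pr by blast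
    then show ?thesis using num_intra_Sset[OF that] by (simp add: num_intra_def m_def)
  qed
  have K: "real (card (Sset n s)) \<noteq> 0" using Sset_ne[OF ss] finite_Sset by simp
  have "(\<Sum>B\<in>Sset n s. real (card (Pr n \<inter> intra_pairs B))) = (\<Sum>B\<in>Sset n s. real m)"
    using c by (rule sum.cong[OF refl])
  then have mean: "(\<Sum>B\<in>Sset n s. real (card (Pr n \<inter> intra_pairs B))) / card (Sset n s) = real m"
    using K by simp
  show ?thesis unfolding var_pmf_of_set[OF finite_Sset Sset_ne[OF ss]] mean
    using c by (simp add: sum.neutral)
qed

lemma var_le:
  assumes ss: "size_spec n s" and J: "J \<subseteq> Pr n"
  shows "measure_pmf.variance (pmf_of_set (Sset n s)) (\<lambda>B. real (card (J \<inter> intra_pairs B))) \<le> 4 * real n ^ 3"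
proof -
  define h where "h x = hh n s (fst x) (snd x)" for x
  define B0 where "B0 = {x :: nat set \<times> nat set. fst x \<inter> snd x = {}}"
  define T where "T = 2 * real n ^ 3"
  obtain c where c: "\<And>x. x \<in> Pr n \<times> Pr n \<inter> B0 \<Longrightarrow> h x = c"
  proof (cases "Pr n \<times> Pr n \<inter> B0 = {}")
    case True then show ?thesis using that by blast
  next
    case False
    then obtain x0 where x0: "x0 \<in> Pr n \<times> Pr n \<inter> B0" by blast
    show ?thesis
    proof (rule that[of "h x0"])
      fix x assume "x \<in> Pr n \<times> Pr n \<inter> B0"
      then show "h x = h x0" using x0 unfolding h_def B0_def
        using hh_const[of "fst x" n "snd x" "fst x0" "snd x0" s] by auto
    qed
  qed
  have dec: "measure_pmf.variance (pmf_of_set (Sset n s)) (\<lambda>B. real (card (J' \<inter> intra_pairs B)))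
      = c * card (J' \<times> J' \<inter> B0) + (\<Sum>x\<in>J' \<times> J' - B0. h x)
      \<and> \<bar>\<Sum>x\<in>J' \<times> J' - B0. h x\<bar> \<le> T" if J': "J' \<subseteq> Pr n" for J'
  proof
    have fJ: "finite J'" using J' finite_Pr finite_subset by blast
    have "measure_pmf.variance (pmf_of_set (Sset n s)) (\<lambda>B. real (card (J' \<inter> intra_pairs B)))
       = (\<Sum>x\<in>J' \<times> J'. h x)"
      unfolding var_hh[OF ss fJ] h_def sum.cartesian_product by (simp add: case_prod_beta)
    also have "\<dots> = (\<Sum>x\<in>J' \<times> J' \<inter> B0. h x) + (\<Sum>x\<in>J' \<times> J' - B0. h x)"
      using fJ by (intro sum.Int_Diff) simp
    also have "(\<Sum>x\<in>J' \<times> J' \<inter> B0. h x) = (\<Sum>x\<in>J' \<times> J' \<inter> B0. c)"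
      using J' by (intro sum.cong refl c) auto
    finally show "measure_pmf.variance (pmf_of_set (Sset n s)) (\<lambda>B. real (card (J' \<inter> intra_pairs B)))
      = c * card (J' \<times> J' \<inter> B0) + (\<Sum>x\<in>J' \<times> J' - B0. h x)" by simp
    have "\<bar>\<Sum>x\<in>J' \<times> J' - B0. h x\<bar> \<le> (\<Sum>x\<in>J' \<times> J' - B0. \<bar>h x\<bar>)" by (rule sum_abs)
    also have "\<dots> \<le> real (card (J' \<times> J' - B0)) * 1"
      by (rule sum_bounded_above) (simp add: h_def hh_bound[OF ss])
    also have "card (J' \<times> J' - B0) \<le> card (Pr n \<times> Pr n - B0)"
      using J' finite_Pr by (intro card_mono) auto
    then have "real (card (J' \<times> J' - B0)) \<le> 2 * real n ^ 3"
    proof -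
      have "card (Pr n \<times> Pr n - B0) \<le> 2 * n ^ 3" using card_ND[of n] unfolding B0_def .
      with \<open>card (J' \<times> J' - B0) \<le> card (Pr n \<times> Pr n - B0)\<close>
      have "card (J' \<times> J' - B0) \<le> 2 * n ^ 3" by linarith
      then have "real (card (J' \<times> J' - B0)) \<le> real (2 * n ^ 3)" by (simp only: of_nat_le_iff)
      then show ?thesis by simp
    qed
    finally show "\<bar>\<Sum>x\<in>J' \<times> J' - B0. h x\<bar> \<le> T" unfolding T_def by simp
  qed
  have dP: "measure_pmf.variance (pmf_of_set (Sset n s)) (\<lambda>B. real (card (Pr n \<inter> intra_pairs B)))
      = c * card (Pr n \<times> Pr n \<inter> B0) + (\<Sum>x\<in>Pr n \<times> Pr n - B0. h x)"
    and rP: "\<bar>\<Sum>x\<in>Pr n \<times> Pr n - B0. h x\<bar> \<le> T" using dec[of "Pr n"] by auto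
  have cb: "\<bar>c\<bar> * card (Pr n \<times> Pr n \<inter> B0) \<le> T"
    using dP rP var_zero[OF ss] by (simp add: abs_mult)
  have dJ: "measure_pmf.variance (pmf_of_set (Sset n s)) (\<lambda>B. real (card (J \<inter> intra_pairs B)))
      = c * card (J \<times> J \<inter> B0) + (\<Sum>x\<in>J \<times> J - B0. h x)"
    and rJ: "\<bar>\<Sum>x\<in>J \<times> J - B0. h x\<bar> \<le> T" using dec[OF J] by auto
  have "card (J \<times> J \<inter> B0) \<le> card (Pr n \<times> Pr n \<inter> B0)"
    using J finite_Pr by (intro card_mono) auto
  then have "\<bar>c\<bar> * card (J \<times> J \<inter> B0) \<le> \<bar>c\<bar> * card (Pr n \<times> Pr n \<inter> B0)"
    by (intro mult_left_mono) auto
  moreover have "c * card (J \<times> J \<inter> B0) \<le> \<bar>c\<bar> * card (J \<times> J \<inter> B0)"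
    by (intro mult_right_mono) auto
  ultimately show ?thesis unfolding dJ using rJ cb unfolding T_def by linarith
qed



lemma two_choose: "2 * (n choose 2) = n * (n - 1)"
proof (induction n)
  case 0 then show ?case by simp
next
  case (Suc n)
  have "Suc n choose 2 = n + (n choose 2)"
    by (simp add: numeral_2_eq_2)
  then show ?case using Suc by (cases n) (auto simp: algebra_simps)
qed

lemma N_ge: assumes "n \<ge> 2" shows "real n ^ 2 \<le> 4 * real (n choose 2)"
proof -
  have "2 * real (n choose 2) = real n * (real n - 1)"
  proof -
    have "real (2 * (n choose 2)) = real (n * (n - 1))" by (simp only: two_choose)
    moreover have "real (n - 1) = real n - 1" using assms by (simp add: of_nat_diff)
    ultimately show ?thesis by simp
  qed
  moreover have "real n * (real n - 2) \<ge> 0" using assms by simp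
  ultimately show ?thesis by (simp add: power2_eq_square algebra_simps)
qed

lemma mean_lemma:
  assumes ss: "size_spec n s" and I: "I \<subseteq> Pr n" and n: "n \<ge> 2"
  shows "(\<Sum>B\<in>Sset n s. real (card (I \<inter> intra_pairs B))) / card (Sset n s)
        = real (card I) * real (sum_mset (image_mset (\<lambda>k. k choose 2) s)) / real (n choose 2)"
proof -
  define K where "K = real (card (Sset n s))"
  have K: "K > 0" using Sset_ne[OF ss] finite_Sset by (simp add: K_def card_gt_0_iff)
  define m where "m = real (sum_mset (image_mset (\<lambda>k. k choose 2) s))"
  define p0 where "p0 = {1, 2::nat}"
  have p0: "p0 \<in> Pr n" using n by (auto simp: Pr_def p0_def)
  have gen: "(\<Sum>B\<in>Sset n s. real (card (J \<inter> intra_pairs B))) = real (card J) * cnt n s p0 p0"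
    if J: "J \<subseteq> Pr n" for J
  proof -
    have fJ: "finite J" using J finite_Pr finite_subset by blast
    have "(\<Sum>B\<in>Sset n s. real (card (J \<inter> intra_pairs B)))
        = (\<Sum>B\<in>Sset n s. \<Sum>p\<in>J. if p \<in> intra_pairs B then 1 else 0)"
      using card_inter_sum[OF fJ] by simp
    also have "\<dots> = (\<Sum>p\<in>J. real (cnt n s p p))"
      by (subst sum.swap) (simp add: cnt_sum if_sq)
    also have "\<dots> = (\<Sum>p\<in>J. real (cnt n s p0 p0))"
    proof (rule sum.cong[OF refl])
      fix p assume "p \<in> J"
      then have "p \<in> Pr n" using J by blast
      then show "real (cnt n s p p) = real (cnt n s p0 p0)" using cnt_pp_const[OF _ p0] by simp
    qed
    finally show ?thesis by simp
  qed
  have "(\<Sum>B\<in>Sset n s. real (card (Pr n \<inter> intra_pairs B))) = (\<Sum>B\<in>Sset n s. m)"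
  proof (rule sum.cong[OF refl])
    fix B assume B: "B \<in> Sset n s"
    have "partition_on {1..n} B" using B by (auto simp: Sset_def clusterings_def)
    then have "Pr n \<inter> intra_pairs B = intra_pairs B" using intra_pairs_Pr by blast
    then show "real (card (Pr n \<inter> intra_pairs B)) = m" using num_intra_Sset[OF B] by (simp add: num_intra_def m_def)
  qed
  then have "real (n choose 2) * cnt n s p0 p0 = K * m" using gen[of "Pr n"] by (simp add: card_Pr K_def)
  moreover have N: "real (n choose 2) > 0" using n by simp
  ultimately have "cnt n s p0 p0 = K * m / real (n choose 2)" by (simp add: field_simps)
  then show ?thesis unfolding gen[OF I] K_def[symmetric] m_def[symmetric] using K by simp
qed



lemma prob_bound:
  assumes ss: "size_spec n s" and Ain: "A \<in> clusterings n" and n: "n \<ge> 2" and e: "(\<epsilon>::real) > 0"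
  shows "measure_pmf.prob (pmf_of_set (Sset n s))
             {B. \<bar>real (N11 A B) / real (n choose 2)
                 - real (num_intra A) * real (num_intra B) / (real (n choose 2))^2\<bar> > \<epsilon>}
         \<le> 64 / (\<epsilon>^2 * real n)"
proof -
  define S where "S = Sset n s"
  define I where "I = intra_pairs A"
  define K where "K = real (card S)"
  define N where "N = real (n choose 2)"
  define m where "m = real (sum_mset (image_mset (\<lambda>k. k choose 2) s))"
  define M where "M = real (card I) * m / N"
  define f where "f B = real (card (I \<inter> intra_pairs B))" for B
  define V where "V = (\<Sum>B\<in>S. (f B - M)^2) / K"
  define E where "E = {B. \<bar>real (N11 A B) / real (n choose 2)
                 - real (num_intra A) * real (num_intra B) / (real (n choose 2))^2\<bar> > \<epsilon>}"
  have fS: "finite S" and neS: "S \<noteq> {}" using finite_Sset Sset_ne[OF ss] by (auto simp: S_def)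
  have K: "K > 0" using fS neS by (simp add: K_def card_gt_0_iff)
  have N: "N > 0" using n by (simp add: N_def)
  have IP: "I \<subseteq> Pr n" using Ain intra_pairs_Pr by (auto simp: I_def clusterings_def)
  have mean: "(\<Sum>B\<in>S. f B) / K = M"
    using mean_lemma[OF ss IP n] by (simp add: S_def f_def K_def M_def m_def N_def)
  have VV: "V = measure_pmf.variance (pmf_of_set S) f"
    by (subst var_pmf_of_set[OF fS neS]) (simp add: V_def K_def mean[unfolded K_def])
  have Vle: "V \<le> 4 * real n ^ 3" unfolding VV S_def f_def using var_le[OF ss IP] .
  define Q where "Q = {B \<in> S. (\<epsilon> * N)^2 \<le> (f B - M)^2}"
  have sub: "S \<inter> E \<subseteq> Q"
  proof
    fix B assume B: "B \<in> S \<inter> E"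
    have nB: "real (num_intra B) = m" using num_intra_Sset[of B n s] B by (simp add: S_def m_def)
    have eq: "real (N11 A B) / real (n choose 2) - real (num_intra A) * real (num_intra B) / (real (n choose 2))^2
        = (f B - M) / N"
      using N unfolding nB by (simp add: N11_def f_def I_def M_def num_intra_def N_def field_simps power2_eq_square)
    have "\<bar>(f B - M) / N\<bar> > \<epsilon>" using B unfolding E_def eq[symmetric] by simp
    then have "\<bar>f B - M\<bar> / N > \<epsilon>" using N by simp
    then have "\<epsilon> * N < \<bar>f B - M\<bar>" using N by (simp add: pos_less_divide_eq)
    then have "(\<epsilon> * N)^2 \<le> \<bar>f B - M\<bar>^2" using e N by (intro power_mono) auto
    then show "B \<in> Q" using B by (simp add: Q_def)
  qed
  have fQ: "finite Q" using fS by (simp add: Q_def)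
  have "real (card Q) * (\<epsilon> * N)^2 = (\<Sum>B\<in>Q. (\<epsilon> * N)^2)" by simp
  also have "\<dots> \<le> (\<Sum>B\<in>Q. (f B - M)^2)" by (intro sum_mono) (simp add: Q_def)
  also have "\<dots> \<le> (\<Sum>B\<in>S. (f B - M)^2)" using fS by (intro sum_mono2) (auto simp: Q_def)
  also have "\<dots> = K * V" using K by (simp add: V_def)
  finally have cQ: "real (card Q) * (\<epsilon> * N)^2 \<le> K * V" .
  have pos: "(\<epsilon> * N)^2 > 0" using e N by simp
  have "measure_pmf.prob (pmf_of_set S) E = real (card (S \<inter> E)) / K"
    using measure_pmf_of_set[OF neS fS] by (simp add: K_def)
  also have "\<dots> \<le> real (card Q) / K"
    using K card_mono[OF fQ sub] by (intro divide_right_mono) auto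
  also have "\<dots> \<le> V / (\<epsilon> * N)^2"
    using cQ K pos by (simp add: field_simps)
  also have "\<dots> \<le> 4 * real n ^ 3 / (\<epsilon> * N)^2"
    using Vle pos by (intro divide_right_mono) auto
  also have "\<dots> \<le> 4 * real n ^ 3 / (\<epsilon>^2 * (real n ^ 4 / 16))"
  proof (rule divide_left_mono)
    have "real n ^ 2 \<le> 4 * N" using N_ge[OF n] by (simp add: N_def)
    then have "(real n ^ 2)^2 \<le> (4 * N)^2" by (intro power_mono) auto
    moreover have "(real n ^ 2)^2 = real n ^ 4" "(4 * N)^2 = 16 * N^2" by (simp_all add: power_mult_distrib flip: power_mult)
    ultimately have "real n ^ 4 / 16 \<le> N^2" by simp
    then show "\<epsilon>^2 * (real n ^ 4 / 16) \<le> (\<epsilon> * N)^2"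
      using e by (simp add: power_mult_distrib)
    show "0 \<le> 4 * real n ^ 3" by simp
    show "0 < (\<epsilon> * N)\<^sup>2 * (\<epsilon>\<^sup>2 * (real n ^ 4 / 16))" using pos e n by simp
  qed
  also have "\<dots> = 64 / (\<epsilon>^2 * real n)"
    using n e by (simp add: field_simps power_numeral_reduce)
  finally show ?thesis unfolding S_def E_def .
qed



theorem mainTheorem6:
  fixes A :: "nat \<Rightarrow> nat set set" and s :: "nat \<Rightarrow> nat multiset"
  assumes A: "\<And>n. A n \<in> clusterings n"
    and s: "\<And>n. size_spec n (s n)"
  shows "(\<lambda>n. measure_pmf.variance (unif_clustering n (s n))
            (\<lambda>B. real (N11 (A n) B))) \<in> o(\<lambda>n. real n ^ 4) \<and>
         (\<forall>\<epsilon>::real. \<epsilon> > 0 \<longrightarrow>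
          (\<lambda>n. measure_pmf.prob (unif_clustering n (s n))
             {B. \<bar>real (N11 (A n) B) / real (n choose 2)
                 - real (num_intra (A n)) * real (num_intra B) / (real (n choose 2))^2\<bar> > \<epsilon>})
          \<longlonglongrightarrow> 0)"
proof
  have U: "unif_clustering n (s n) = pmf_of_set (Sset n (s n))" for n
    by (simp add: unif_clustering_def Sset_def)
  define V where "V n = measure_pmf.variance (unif_clustering n (s n)) (\<lambda>B. real (N11 (A n) B))" for n
  have IP: "intra_pairs (A n) \<subseteq> Pr n" for n using A intra_pairs_Pr by (auto simp: clusterings_def)
  have Vle: "V n \<le> 4 * real n ^ 3" for n
    unfolding V_def U N11_def using var_le[OF s IP] .
  have V0: "0 \<le> V n" for n unfolding V_def U by (rule var_nonneg[OF s])
  show "(\<lambda>n. measure_pmf.variance (unif_clustering n (s n)) (\<lambda>B. real (N11 (A n) B))) \<in> o(\<lambda>n. real n ^ 4)"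
    unfolding V_def[symmetric]
  proof (rule landau_o.smallI)
    fix c :: real assume c: "c > 0"
    have "eventually (\<lambda>n. nat \<lceil>4 / c\<rceil> \<le> n) sequentially" by (rule eventually_ge_at_top)
    then show "eventually (\<lambda>n. norm (V n) \<le> c * norm (real n ^ 4)) sequentially"
    proof (rule eventually_mono)
      fix n assume "nat \<lceil>4 / c\<rceil> \<le> n"
      then have "4 / c \<le> real n" by linarith
      then have "4 \<le> c * real n" using c by (simp add: field_simps)
      then have "4 * real n ^ 3 \<le> (c * real n) * real n ^ 3" by (intro mult_right_mono) auto
      then have "V n \<le> c * real n ^ 4" using Vle[of n] by (simp add: power_numeral_reduce algebra_simps)
      then show "norm (V n) \<le> c * norm (real n ^ 4)" using V0[of n] by simp
    qed
  qed
  show "\<forall>\<epsilon>::real. \<epsilon> > 0 \<longrightarrow>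
          (\<lambda>n. measure_pmf.prob (unif_clustering n (s n))
             {B. \<bar>real (N11 (A n) B) / real (n choose 2)
                 - real (num_intra (A n)) * real (num_intra B) / (real (n choose 2))^2\<bar> > \<epsilon>})
          \<longlonglongrightarrow> 0"
  proof (intro allI impI)
    fix \<epsilon> :: real assume e: "\<epsilon> > 0"
    show "(\<lambda>n. measure_pmf.prob (unif_clustering n (s n))
             {B. \<bar>real (N11 (A n) B) / real (n choose 2)
                 - real (num_intra (A n)) * real (num_intra B) / (real (n choose 2))^2\<bar> > \<epsilon>})
          \<longlonglongrightarrow> 0"
    proof (rule tendsto_sandwich[of "\<lambda>_. 0" _ _ "\<lambda>n. (64 / \<epsilon>^2) / real n"])
      show "eventually (\<lambda>n. 0 \<le> measure_pmf.prob (unif_clustering n (s n))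
             {B. \<bar>real (N11 (A n) B) / real (n choose 2)
                 - real (num_intra (A n)) * real (num_intra B) / (real (n choose 2))^2\<bar> > \<epsilon>}) sequentially"
        by simp
      have "eventually (\<lambda>n. 2 \<le> n) sequentially" by (rule eventually_ge_at_top)
      then show "eventually (\<lambda>n. measure_pmf.prob (unif_clustering n (s n))
             {B. \<bar>real (N11 (A n) B) / real (n choose 2)
                 - real (num_intra (A n)) * real (num_intra B) / (real (n choose 2))^2\<bar> > \<epsilon>}
             \<le> (64 / \<epsilon>^2) / real n) sequentially"
      proof (rule eventually_mono)
        fix n :: nat assume "2 \<le> n"
        then show "measure_pmf.prob (unif_clustering n (s n))
             {B. \<bar>real (N11 (A n) B) / real (n choose 2)
                 - real (num_intra (A n)) * real (num_intra B) / (real (n choose 2))^2\<bar> > \<epsilon>}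
             \<le> (64 / \<epsilon>^2) / real n"
          using prob_bound[OF s A \<open>2 \<le> n\<close> e] unfolding U by simp
      qed
      show "(\<lambda>_. 0::real) \<longlonglongrightarrow> 0" by simp
      show "(\<lambda>n. 64 / \<epsilon>^2 / real n) \<longlonglongrightarrow> 0" by (rule lim_const_over_n)
    qed
  qed
qed

end
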